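(* Let $\mathcal{A}$ be a $3\times 3$ octonionic Hermitian matrix ($\mathcal{A}^\dagger=\mathcal{A}$), and let $v\in\mathbb{O}^3$, $\lambda\in\mathbb{O}$ satisfy $\mathcal{A}v=v\lambda$ and $v^\dagger v=1$. Then $$v^\dagger(\mathcal{A}v)=\lambda \qquad\text{and}\qquad [v^\dagger,\mathcal{A},v]:=(v^\dagger\mathcal{A})v-v^\dagger(\mathcal{A}v)=-2\,\mathrm{Im}(\lambda).$$
   Context: $\mathbb{O}$ denotes the octonions; $v^\dagger$ is the conjugate transpose (row vector of conjugated entries); all products of vectors and matrices are computed entrywise with octonionic multiplication in the order written, parenthesized as indicated. $\mathrm{Im}(\lambda)=\tfrac12(\lambda-\overline{\lambda})$. $v\lambda$ means each component of $v$ multiplied on the right by $\lambda$. *)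

theory Defs
  imports Complex_Main
begin

text \<open>Quaternions via Cayley-Dickson doubling of the complex numbers:
  (a,b)(c,d) = (ac - conj(d) b, d a + b conj(c)), conj(a,b) = (conj a, -b).\<close>

datatype quat = Quat complex complex

instantiation quat :: "{zero, one, plus, minus, uminus, times}"
begin
definition "0 = Quat 0 0"
definition "1 = Quat 1 0"
fun plus_quat where "Quat a b + Quat c d = Quat (a + c) (b + d)"
fun minus_quat where "Quat a b - Quat c d = Quat (a - c) (b - d)"
fun uminus_quat where "- Quat a b = Quat (- a) (- b)"
fun times_quat where "Quat a b * Quat c d = Quat (a * c - cnj d * b) (d * a + b * cnj c)"
instance ..
end

fun quat_cnj :: "quat \<Rightarrow> quat" where "quat_cnj (Quat a b) = Quat (cnj a) (- b)"

instance quat :: ab_group_add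
proof
  fix x y z :: quat
  show "x + y + z = x + (y + z)" by (cases x; cases y; cases z) (simp add: algebra_simps)
  show "x + y = y + x" by (cases x; cases y) (simp add: algebra_simps)
  show "0 + x = x" by (cases x) (simp add: zero_quat_def)
  show "- x + x = 0" by (cases x) (simp add: zero_quat_def)
  show "x - y = x + - y" by (cases x; cases y) simp
qed

text \<open>Octonions via Cayley-Dickson doubling of the quaternions (same formulas).\<close>

datatype oct = Oct quat quat

instantiation oct :: "{zero, one, plus, minus, uminus, times}"
begin
definition "0 = Oct 0 0"
definition "1 = Oct 1 0"
fun plus_oct where "Oct a b + Oct c d = Oct (a + c) (b + d)"
fun minus_oct where "Oct a b - Oct c d = Oct (a - c) (b - d)"
fun uminus_oct where "- Oct a b = Oct (- a) (- b)"
fun times_oct where "Oct a b * Oct c d = Oct (a * c - quat_cnj d * b) (d * a + b * quat_cnj c)"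
instance ..
end

instance oct :: ab_group_add
proof
  fix x y z :: oct
  show "x + y + z = x + (y + z)" by (cases x; cases y; cases z) (simp add: algebra_simps)
  show "x + y = y + x" by (cases x; cases y) (simp add: algebra_simps)
  show "0 + x = x" by (cases x) (simp add: zero_oct_def)
  show "- x + x = 0" by (cases x) (simp add: zero_oct_def)
  show "x - y = x + - y" by (cases x; cases y) simp
qed

fun oct_cnj :: "oct \<Rightarrow> oct" where "oct_cnj (Oct a b) = Oct (quat_cnj a) (- b)"

definition oct_of_real :: "real \<Rightarrow> oct" where
  "oct_of_real r = Oct (Quat (complex_of_real r) 0) 0"

definition oct_Im :: "oct \<Rightarrow> oct" where
  "oct_Im x = oct_of_real (1/2) * (x - oct_cnj x)"

definition hermitian3 :: "(nat \<Rightarrow> nat \<Rightarrow> oct) \<Rightarrow> bool" where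
  "hermitian3 A \<longleftrightarrow> (\<forall>i<3. \<forall>j<3. A j i = oct_cnj (A i j))"

definition mat_vec3 :: "(nat \<Rightarrow> nat \<Rightarrow> oct) \<Rightarrow> (nat \<Rightarrow> oct) \<Rightarrow> nat \<Rightarrow> oct" where
  "mat_vec3 A v i = (\<Sum>j<3. A i j * v j)"

definition dag_mat3 :: "(nat \<Rightarrow> oct) \<Rightarrow> (nat \<Rightarrow> nat \<Rightarrow> oct) \<Rightarrow> nat \<Rightarrow> oct" where
  "dag_mat3 v A j = (\<Sum>i<3. oct_cnj (v i) * A i j)"

definition dag_vec3 :: "(nat \<Rightarrow> oct) \<Rightarrow> (nat \<Rightarrow> oct) \<Rightarrow> oct" where
  "dag_vec3 w u = (\<Sum>i<3. oct_cnj (w i) * u i)"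

definition row_vec3 :: "(nat \<Rightarrow> oct) \<Rightarrow> (nat \<Rightarrow> oct) \<Rightarrow> oct" where
  "row_vec3 r u = (\<Sum>i<3. r i * u i)"

end

theory Submission
  imports Defs
begin

lemma oct_decomp: obtains a b c d e f g h where
  "x = Oct (Quat (Complex a b) (Complex c d)) (Quat (Complex e f) (Complex g h))"
  by (metis complex.exhaust quat.exhaust oct.exhaust)

lemma alt1: "(oct_cnj x * x) * y = oct_cnj x * (x * y)"
  apply (rule oct_decomp[of x]; rule oct_decomp[of y])
  by (simp add: complex_eq_iff algebra_simps)

lemma alt2: "(y * oct_cnj x) * x = y * (oct_cnj x * x)"
  apply (rule oct_decomp[of x]; rule oct_decomp[of y])
  by (simp add: complex_eq_iff algebra_simps)

lemma cnj_mult: "oct_cnj (x * y) = oct_cnj y * oct_cnj x"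
  apply (rule oct_decomp[of x]; rule oct_decomp[of y])
  by (simp add: complex_eq_iff algebra_simps)

lemma cnj_add: "oct_cnj (x + y) = oct_cnj x + oct_cnj y"
  apply (rule oct_decomp[of x]; rule oct_decomp[of y])
  by (simp add: complex_eq_iff algebra_simps)

lemma cnj_cnj: "oct_cnj (oct_cnj x) = x"
  apply (rule oct_decomp[of x])
  by (simp add: complex_eq_iff algebra_simps)

lemma distl: "x * (y + z) = x * y + x * (z::oct)"
  apply (rule oct_decomp[of x]; rule oct_decomp[of y]; rule oct_decomp[of z])
  by (simp add: complex_eq_iff algebra_simps)

lemma distr: "(x + y) * z = x * z + y * (z::oct)"
  apply (rule oct_decomp[of x]; rule oct_decomp[of y]; rule oct_decomp[of z])
  by (simp add: complex_eq_iff algebra_simps)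

lemma one_mult: "1 * (x::oct) = x"
  apply (rule oct_decomp[of x])
  by (simp add: complex_eq_iff algebra_simps one_oct_def one_quat_def zero_quat_def)

lemma mult_one: "(x::oct) * 1 = x"
  apply (rule oct_decomp[of x])
  by (simp add: complex_eq_iff algebra_simps one_oct_def one_quat_def zero_quat_def)

lemma im_lem: "oct_cnj x - x = oct_of_real (-2) * oct_Im x"
  apply (rule oct_decomp[of x])
  by (simp add: complex_eq_iff algebra_simps oct_Im_def oct_of_real_def zero_quat_def)

lemma sum3: "(\<Sum>i<(3::nat). f i) = f 0 + f 1 + (f 2 :: oct)"
  by (simp add: numeral_3_eq_3 lessThan_Suc eval_nat_numeral add.commute add.left_commute)

theorem mainTheorem5:
  fixes A :: "nat \<Rightarrow> nat \<Rightarrow> oct" and v :: "nat \<Rightarrow> oct" and lam :: oct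
  assumes "hermitian3 A"
    and "\<forall>i<3. mat_vec3 A v i = v i * lam"
    and "dag_vec3 v v = 1"
  shows "dag_vec3 v (mat_vec3 A v) = lam \<and>
         row_vec3 (dag_mat3 v A) v - dag_vec3 v (mat_vec3 A v) = oct_of_real (-2) * oct_Im lam"
proof -
  have n: "oct_cnj (v 0) * v 0 + oct_cnj (v 1) * v 1 + oct_cnj (v 2) * v 2 = 1"
    using assms(3) by (simp add: dag_vec3_def sum3)
  have e1: "dag_vec3 v (mat_vec3 A v) = lam"
  proof -
    have "dag_vec3 v (mat_vec3 A v) = (\<Sum>i<3. oct_cnj (v i) * (v i * lam))"
      unfolding dag_vec3_def using assms(2) by (intro sum.cong) auto
    also have "\<dots> = (oct_cnj (v 0) * v 0 + oct_cnj (v 1) * v 1 + oct_cnj (v 2) * v 2) * lam"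
      by (simp add: sum3 distr alt1)
    finally show ?thesis using n one_mult by simp
  qed
  have dm: "dag_mat3 v A j = oct_cnj lam * oct_cnj (v j)" if "j < 3" for j
  proof -
    have h: "A i j = oct_cnj (A j i)" if "i < 3" for i
      using assms(1) that \<open>j < 3\<close> unfolding hermitian3_def by blast
    have "dag_mat3 v A j = (\<Sum>i<3. oct_cnj (A j i * v i))"
      unfolding dag_mat3_def using h by (intro sum.cong) (auto simp: cnj_mult)
    also have "\<dots> = oct_cnj (mat_vec3 A v j)"
      unfolding mat_vec3_def sum3 cnj_add ..
    also have "\<dots> = oct_cnj lam * oct_cnj (v j)" using assms(2) that by (simp add: cnj_mult)
    finally show ?thesis .
  qed
  have "row_vec3 (dag_mat3 v A) v = (\<Sum>j<3. (oct_cnj lam * oct_cnj (v j)) * v j)"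
    unfolding row_vec3_def using dm by (intro sum.cong) auto
  also have "\<dots> = oct_cnj lam * (oct_cnj (v 0) * v 0 + oct_cnj (v 1) * v 1 + oct_cnj (v 2) * v 2)"
    by (simp add: sum3 distl alt2)
  also have "\<dots> = oct_cnj lam" using n mult_one by simp
  finally have "row_vec3 (dag_mat3 v A) v = oct_cnj lam" .
  with e1 im_lem show ?thesis by simp
qed

end
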